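(* Let $b\in B$, $i\in I$, $m=\varphi_i(b)$, $\xi\in P$, $j\ge0$, $n\ge0$ and $0\le t\le s\le m$. Suppose $p\in\mathcal P_j(\tilde f_i^sb,\xi)$ and $\tilde e_i^{\,n}p\in\mathcal P_j(\tilde f_i^tb,\xi+(n+t-s)\alpha_i)$. Then $$E(\tilde e_i^{\,n}p)=E(p)+\bigl((j+1)(s-t)-n\bigr)\delta_{0i}.$$
   Context: $\mathfrak g$ is an affine Kac–Moody algebra with index set $I$ ($0$ the special node), Cartan matrix $(a_{ij})$, simple coroots $h_i$, fundamental weights $\Lambda_i$, null root $\delta$. $P=\bigoplus_{i\in I}\mathbb Z\Lambda_i\oplus\mathbb Z\delta$, $P_{cl}=\bigoplus_{i\in I}\mathbb Z\Lambda_i$, $cl:P\to P_{cl}$ the projection killing $\delta$; $\alpha_i=\sum_ja_{ji}\Lambda_j+\delta_{i0}\delta$. $B$ is a finite crystal with $wt:B\to P_{cl}$, Kashiwara operators $\tilde e_i,\tilde f_i$, $\varepsilon_i(b)=\max\{k:\tilde e_i^kb\ne0\}$, $\varphi_i(b)=\max\{k:\tilde f_i^kb\ne0\}$. Tensor products: $wt$ is additive; $\tilde e_i(b_1\otimes b_2)=\tilde e_ib_1\otimes b_2$ if $\varphi_i(b_1)\ge\varepsilon_i(b_2)$ and $=b_1\otimes\tilde e_ib_2$ otherwise; $\tilde f_i(b_1\otimes b_2)=\tilde f_ib_1\otimes b_2$ if $\varphi_i(b_1)>\varepsilon_i(b_2)$ and $=b_1\otimes\tilde f_ib_2$ otherwise.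 An energy function is $H:B\otimes B\to\mathbb Z$ such that whenever $\tilde e_i(b\otimes b')\neq0$: $H(\tilde e_i(b\otimes b'))=H(b\otimes b')$ if $i\ne0$; $=H(b\otimes b')+1$ if $i=0$ and $\varphi_0(b)\ge\varepsilon_0(b')$; $=H(b\otimes b')-1$ if $i=0$ and $\varphi_0(b)<\varepsilon_0(b')$. For $j\ge0$, $b\in B$, $\mu\in P$: $\mathcal P_j(b,\mu)=\{b\otimes b_j\otimes\cdots\otimes b_1\in B^{\otimes(j+1)}:wt(b_j)+\cdots+wt(b_1)=cl(\mu)\}$ and $E(b_{j+1}\otimes\cdots\otimes b_1)=\sum_{i=1}^j iH(b_{i+1}\otimes b_i)$. *)

theory Defs
  imports Main
begin

definition gcm :: "('i \<Rightarrow> 'i \<Rightarrow> int) \<Rightarrow> bool" where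
  "gcm a \<longleftrightarrow> (\<forall>i. a i i = 2) \<and> (\<forall>i j. i \<noteq> j \<longrightarrow> a i j \<le> 0)
     \<and> (\<forall>i j. a i j = 0 \<longleftrightarrow> a j i = 0)"

definition indecomposable :: "('i \<Rightarrow> 'i \<Rightarrow> int) \<Rightarrow> bool" where
  "indecomposable a \<longleftrightarrow>
     (\<forall>S. S \<noteq> {} \<and> S \<noteq> UNIV \<longrightarrow> (\<exists>i\<in>S. \<exists>j. j \<notin> S \<and> a i j \<noteq> 0))"

(* affine type (Kac, Thm 4.3): indecomposable GCM admitting u > 0 with A u = 0 *)
definition affine_cartan :: "('i::finite \<Rightarrow> 'i \<Rightarrow> int) \<Rightarrow> bool" where
  "affine_cartan a \<longleftrightarrow> gcm a \<and> indecomposable a \<and>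
     (\<exists>u::'i \<Rightarrow> int. (\<forall>i. u i > 0) \<and> (\<forall>i. (\<Sum>j\<in>UNIV. a i j * u j) = 0))"

(* special node i0: the canonical central element c = sum a_i^vee h_i has a_{i0}^vee = 1,
   where (a_i^vee) is the positive integer vector with (a_i^vee)^T A = 0 *)
definition special_node :: "('i::finite \<Rightarrow> 'i \<Rightarrow> int) \<Rightarrow> 'i \<Rightarrow> bool" where
  "special_node a i0 \<longleftrightarrow>
     (\<exists>c::'i \<Rightarrow> int. (\<forall>i. c i > 0) \<and> (\<forall>j. (\<Sum>i\<in>UNIV. c i * a i j) = 0) \<and> c i0 = 1)"

(* P_cl = \<oplus> Z Lambda_i is modelled as 'i => int (coefficients of the Lambda_i);
   P = P_cl \<oplus> Z delta is modelled as pairs (Lambda-coefficients, delta-coefficient). *)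
type_synonym 'i wcl = "'i \<Rightarrow> int"
type_synonym 'i wt = "('i \<Rightarrow> int) \<times> int"

definition cl :: "'i wt \<Rightarrow> 'i wcl" where "cl \<mu> = fst \<mu>"

definition alpha :: "('i \<Rightarrow> 'i \<Rightarrow> int) \<Rightarrow> 'i \<Rightarrow> 'i \<Rightarrow> 'i wt" where
  "alpha a i0 i = ((\<lambda>j. a j i), (if i = i0 then 1 else 0))"

definition wadd :: "'i wt \<Rightarrow> 'i wt \<Rightarrow> 'i wt" where
  "wadd \<mu> \<nu> = ((\<lambda>j. fst \<mu> j + fst \<nu> j), snd \<mu> + snd \<nu>)"

definition wsmul :: "int \<Rightarrow> 'i wt \<Rightarrow> 'i wt" where
  "wsmul k \<mu> = ((\<lambda>j. k * fst \<mu> j), k * snd \<mu>)"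

(* iterate a partial operator (None plays the role of 0) *)
fun iter_opt :: "('b \<Rightarrow> 'b option) \<Rightarrow> nat \<Rightarrow> 'b \<Rightarrow> 'b option" where
  "iter_opt g 0 x = Some x"
| "iter_opt g (Suc k) x = Option.bind (g x) (iter_opt g k)"

(* max{k : g^k x \<noteq> 0}; used for both epsilon (g = e_i) and phi (g = f_i) *)
definition depth :: "('b \<Rightarrow> 'b option) \<Rightarrow> 'b \<Rightarrow> nat" where
  "depth g x = (GREATEST k. iter_opt g k x \<noteq> None)"

definition crystal ::
  "('i \<Rightarrow> 'i \<Rightarrow> int) \<Rightarrow> ('b \<Rightarrow> 'i wcl) \<Rightarrow> ('i \<Rightarrow> 'b \<Rightarrow> 'b option)
     \<Rightarrow> ('i \<Rightarrow> 'b \<Rightarrow> 'b option) \<Rightarrow> bool" where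
  "crystal a wt e f \<longleftrightarrow>
     (\<forall>i b b'. f i b = Some b' \<longleftrightarrow> e i b' = Some b) \<and>
     (\<forall>i b b'. e i b = Some b' \<longrightarrow> wt b' = (\<lambda>k. wt b k + a k i)) \<and>
     (\<forall>i b. int (depth (f i) b) = int (depth (e i) b) + wt b i)"

(* e_i on the tensor power B^{\<otimes>(n+1)}; an element b_{n+1} \<otimes> ... \<otimes> b_1 is the list
   [b_{n+1}, ..., b_1], the tensor product being b_{n+1} \<otimes> (b_n \<otimes> (... \<otimes> b_1)). *)
primrec etens :: "('i \<Rightarrow> 'b \<Rightarrow> 'b option) \<Rightarrow> ('i \<Rightarrow> 'b \<Rightarrow> 'b option) \<Rightarrow> nat \<Rightarrow> 'i
     \<Rightarrow> 'b list \<Rightarrow> 'b list option" where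
  "etens e f 0 i xs = (case xs of [x] \<Rightarrow> map_option (\<lambda>y. [y]) (e i x) | _ \<Rightarrow> None)"
| "etens e f (Suc n) i xs = (case xs of
       [] \<Rightarrow> None
     | x # ys \<Rightarrow> if depth (etens e f n i) ys \<le> depth (f i) x
                 then map_option (\<lambda>y. y # ys) (e i x)
                 else map_option (Cons x) (etens e f n i ys))"

definition energy ::
  "('i \<Rightarrow> 'b \<Rightarrow> 'b option) \<Rightarrow> ('i \<Rightarrow> 'b \<Rightarrow> 'b option) \<Rightarrow> 'i \<Rightarrow> ('b \<Rightarrow> 'b \<Rightarrow> int) \<Rightarrow> bool" where
  "energy e f i0 H \<longleftrightarrow>
     (\<forall>i b b' c c'. etens e f 1 i [b, b'] = Some [c, c'] \<longrightarrow>
        H c c' = H b b' + (if i \<noteq> i0 then 0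
                           else if depth (e i0) b' \<le> depth (f i0) b then 1 else -1))"

definition Pset :: "('b \<Rightarrow> 'i wcl) \<Rightarrow> nat \<Rightarrow> 'b \<Rightarrow> 'i wt \<Rightarrow> 'b list set" where
  "Pset wt j b \<mu> = {x # xs | x xs. x = b \<and> length xs = j \<and>
                       (\<lambda>k. \<Sum>y\<leftarrow>xs. wt y k) = cl \<mu>}"

(* E(b_{j+1} \<otimes> ... \<otimes> b_1) = sum_{k=1}^j k H(b_{k+1} \<otimes> b_k); list q = [b_{j+1},...,b_1],
   so b_k = q ! (j + 1 - k) *)
definition Eng :: "('b \<Rightarrow> 'b \<Rightarrow> int) \<Rightarrow> 'b list \<Rightarrow> int" where
  "Eng H q = (let j = length q - 1 in
     (\<Sum>k = 1..j. int k * H (q ! (j - k)) (q ! (j + 1 - k))))"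

end

theory Submission
  imports Defs
begin

definition bnd :: "('b \<Rightarrow> 'b option) \<Rightarrow> 'b \<Rightarrow> bool" where
  "bnd g x \<longleftrightarrow> (\<exists>N. iter_opt g N x = None)"

lemma iter_None_mono: "iter_opt g k x = None \<Longrightarrow> k \<le> k' \<Longrightarrow> iter_opt g k' x = None"
proof (induction k arbitrary: x k')
  case 0 then show ?case by simp
next
  case (Suc k)
  then obtain k'' where k'': "k' = Suc k''" by (cases k') auto
  show ?case
  proof (cases "g x")
    case None then show ?thesis using k'' by simp
  next
    case (Some y)
    then show ?thesis using Suc k'' by simp
  qed
qed

lemma depth_iff:
  assumes "bnd g x"
  shows "(iter_opt g k x \<noteq> None) \<longleftrightarrow> k \<le> depth g x"
proof -
  obtain N where N: "iter_opt g N x = None" using assms unfolding bnd_def by (elim exE)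
  have bd: "\<And>y. iter_opt g y x \<noteq> None \<Longrightarrow> y \<le> N"
  proof -
    fix y assume "iter_opt g y x \<noteq> None"
    then show "y \<le> N" using iter_None_mono[OF N, of y] by linarith
  qed
  have P0: "iter_opt g 0 x \<noteq> None" by simp
  have Pd: "iter_opt g (depth g x) x \<noteq> None"
    unfolding depth_def by (rule GreatestI_nat[where P="\<lambda>k. iter_opt g k x \<noteq> None", OF P0 bd])
  show ?thesis
  proof
    assume "iter_opt g k x \<noteq> None"
    then show "k \<le> depth g x" unfolding depth_def by (rule Greatest_le_nat[where P="\<lambda>k. iter_opt g k x \<noteq> None", OF _ bd])
  next
    assume "k \<le> depth g x"
    then show "iter_opt g k x \<noteq> None" using Pd iter_None_mono[of g k x "depth g x"] by metis
  qed
qed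

lemma depth_rec:
  assumes "bnd g x"
  shows "depth g x = (case g x of None \<Rightarrow> 0 | Some y \<Rightarrow> Suc (depth g y))"
proof (cases "g x")
  case None
  then have "iter_opt g 1 x = None" by simp
  then have "\<not> 1 \<le> depth g x" using depth_iff[OF assms, of 1] by simp
  then show ?thesis using None by simp
next
  case (Some y)
  obtain N where N: "iter_opt g N x = None" using assms unfolding bnd_def by (elim exE)
  then obtain N' where "N = Suc N'" by (cases N) auto
  with N Some have "iter_opt g N' y = None" by simp
  then have by': "bnd g y" unfolding bnd_def by (rule exI)
  have eq: "Suc k \<le> depth g x \<longleftrightarrow> k \<le> depth g y" for k
  proof -
    have "Suc k \<le> depth g x \<longleftrightarrow> iter_opt g (Suc k) x \<noteq> None" using depth_iff[OF assms, of "Suc k"] by simp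
    also have "\<dots> \<longleftrightarrow> iter_opt g k y \<noteq> None" using Some by simp
    also have "\<dots> \<longleftrightarrow> k \<le> depth g y" using depth_iff[OF by', of k] by simp
    finally show ?thesis .
  qed
  have "Suc (depth g y) \<le> depth g x" using eq[of "depth g y"] by simp
  moreover have "depth g x \<le> Suc (depth g y)"
  proof (cases "depth g x")
    case 0 then show ?thesis by simp
  next
    case (Suc d) then show ?thesis using eq[of d] by simp
  qed
  ultimately show ?thesis using Some by simp
qed

lemma bnd_weight:
  fixes w :: "'b \<Rightarrow> int"
  assumes fin: "finite S" and xS: "x \<in> S"
    and step: "\<And>u y. u \<in> S \<Longrightarrow> g u = Some y \<Longrightarrow> y \<in> S \<and> w u < w y"
  shows "bnd g x"
proof -
  have cl: "\<And>k x y. x \<in> S \<Longrightarrow> iter_opt g k x = Some y \<Longrightarrow> y \<in> S \<and> w x + int k \<le> w y"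
  proof -
    fix k
    show "\<And>x y. x \<in> S \<Longrightarrow> iter_opt g k x = Some y \<Longrightarrow> y \<in> S \<and> w x + int k \<le> w y"
    proof (induction k)
      case 0 then show ?case by simp
    next
      case (Suc k)
      then obtain z where z: "g x = Some z" "iter_opt g k z = Some y" by (cases "g x") auto
      have "z \<in> S \<and> w x < w z" using step[OF Suc.prems(1) z(1)] .
      with Suc.IH[OF _ z(2)] show ?case by auto
    qed
  qed
  define M where "M = Max (w ` S)"
  define N where "N = nat (M - w x) + 1"
  have "iter_opt g N x = None"
  proof (rule ccontr)
    assume "iter_opt g N x \<noteq> None"
    then obtain y where "iter_opt g N x = Some y" by auto
    from cl[OF xS this] have "y \<in> S" "w x + int N \<le> w y" by auto
    moreover have "w y \<le> M" unfolding M_def using fin \<open>y \<in> S\<close> by simp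
    moreover have "w x \<le> M" unfolding M_def using fin xS by simp
    ultimately show False unfolding N_def by linarith
  qed
  then show ?thesis unfolding bnd_def by (rule exI)
qed


lemma cr_fe: "crystal a wt e f \<Longrightarrow> f i x = Some y \<longleftrightarrow> e i y = Some x"
  unfolding crystal_def by (elim conjE) auto

lemma cr_wt: "crystal a wt e f \<Longrightarrow> e i x = Some y \<Longrightarrow> wt y = (\<lambda>k. wt x k + a k i)"
  unfolding crystal_def by (elim conjE) auto

lemma bnd_e:
  fixes wt :: "'b::finite \<Rightarrow> 'i \<Rightarrow> int"
  assumes "crystal a wt e f" "a i i = 2"
  shows "bnd (e i) x"
  by (rule bnd_weight[where S=UNIV and w="\<lambda>u. wt u i"]) (auto simp: cr_wt[OF assms(1)] assms(2))

lemma bnd_f: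
  fixes wt :: "'b::finite \<Rightarrow> 'i \<Rightarrow> int"
  assumes "crystal a wt e f" "a i i = 2"
  shows "bnd (f i) x"
proof (rule bnd_weight[where S=UNIV and w="\<lambda>u. - wt u i"])
  fix u y assume "f i u = Some y"
  then have "e i y = Some u" using cr_fe[OF assms(1)] by blast
  then show "y \<in> UNIV \<and> - wt u i < - wt y i" using cr_wt[OF assms(1)] assms(2) by auto
qed auto

definition tw :: "('b \<Rightarrow> 'i \<Rightarrow> int) \<Rightarrow> 'i \<Rightarrow> 'b list \<Rightarrow> int" where
  "tw wt i L = (\<Sum>y\<leftarrow>L. wt y i)"

lemma etens_len_wt:
  assumes cr: "crystal a wt e f" and a2: "a i i = 2"
  shows "length L = Suc n \<Longrightarrow> etens e f n i L = Some L' \<Longrightarrow> length L' = Suc n \<and> tw wt i L' = tw wt i L + 2"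
proof (induction n arbitrary: L L')
  case 0
  then obtain x where x: "L = [x]" by (cases L) auto
  with 0 obtain y where "e i x = Some y" "L' = [y]" by auto
  then show ?case using x cr_wt[OF cr] a2 by (auto simp: tw_def)
next
  case (Suc n)
  then obtain x ys where L: "L = x # ys" and ly: "length ys = Suc n" by (cases L) auto
  show ?case
  proof (cases "depth (etens e f n i) ys \<le> depth (f i) x")
    case True
    with Suc.prems L obtain y where "e i x = Some y" "L' = y # ys" by auto
    then show ?thesis using L ly cr_wt[OF cr] a2 by (auto simp: tw_def)
  next
    case False
    with Suc.prems L obtain ys' where "etens e f n i ys = Some ys'" "L' = x # ys'" by auto
    then show ?thesis using L ly Suc.IH by (auto simp: tw_def)
  qed
qed

lemma bnd_etens:
  fixes wt :: "'b::finite \<Rightarrow> 'i \<Rightarrow> int"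
  assumes cr: "crystal a wt e f" and a2: "a i i = 2" and len: "length L = Suc n"
  shows "bnd (etens e f n i) L"
proof (rule bnd_weight[where S="{xs. set xs \<subseteq> UNIV \<and> length xs = Suc n}" and w="tw wt i"])
  show "finite {xs::'b list. set xs \<subseteq> UNIV \<and> length xs = Suc n}"
    by (rule finite_lists_length_eq) simp
next
  show "L \<in> {xs. set xs \<subseteq> UNIV \<and> length xs = Suc n}" using len by simp
next
  fix u y assume u: "u \<in> {xs::'b list. set xs \<subseteq> UNIV \<and> length xs = Suc n}" and y: "etens e f n i u = Some y"
  have "length u = Suc n" using u by simp
  from etens_len_wt[OF cr a2 this y] show "y \<in> {xs. set xs \<subseteq> UNIV \<and> length xs = Suc n} \<and> tw wt i u < tw wt i y"
    by simp
qed

lemma iter_etens0: "iter_opt (etens e f 0 i) k [x] = map_option (\<lambda>y. [y]) (iter_opt (e i) k x)"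
proof (induction k arbitrary: x)
  case 0 then show ?case by simp
next
  case (Suc k) then show ?case by (cases "e i x") auto
qed

lemma E_base: "depth (etens e f 0 i) [x] = depth (e i) x"
  unfolding depth_def iter_etens0 by simp

lemma dep_e_step:
  fixes wt :: "'b::finite \<Rightarrow> 'i \<Rightarrow> int"
  assumes cr: "crystal a wt e f" and a2: "a i i = 2" and ex: "e i x = Some y"
  shows "depth (e i) x = Suc (depth (e i) y) \<and> depth (f i) y = Suc (depth (f i) x)"
proof -
  have "f i y = Some x" using ex cr_fe[OF cr] by blast
  then show ?thesis using depth_rec[OF bnd_e[OF cr a2], of x] depth_rec[OF bnd_f[OF cr a2], of y] ex
    by simp
qed

lemma dep_e_None:
  fixes wt :: "'b::finite \<Rightarrow> 'i \<Rightarrow> int"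
  assumes cr: "crystal a wt e f" and a2: "a i i = 2" and ex: "e i x = None"
  shows "depth (e i) x = 0"
  using depth_rec[OF bnd_e[OF cr a2], of x] ex by simp

lemma E_step:
  fixes wt :: "'b::finite \<Rightarrow> 'i \<Rightarrow> int"
  assumes cr: "crystal a wt e f" and a2: "a i i = 2" and len: "length L = Suc n"
  shows "depth (etens e f n i) L = (case etens e f n i L of None \<Rightarrow> 0 | Some L' \<Rightarrow> Suc (depth (etens e f n i) L'))"
  by (rule depth_rec[OF bnd_etens[OF cr a2 len]])

lemma E_formula:
  fixes wt :: "'b::finite \<Rightarrow> 'i \<Rightarrow> int"
  assumes cr: "crystal a wt e f" and a2: "a i i = 2"
  shows "length ys = Suc n \<Longrightarrow> int (depth (etens e f (Suc n) i) (x # ys)) =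
     max (int (depth (e i) x)) (int (depth (e i) x) + int (depth (etens e f n i) ys) - int (depth (f i) x))"
proof (induction "depth (e i) x + depth (etens e f n i) ys" arbitrary: x ys rule: less_induct)
  case less
  have lxy: "length (x # ys) = Suc (Suc n)" using less.prems by simp
  show ?case
  proof (cases "depth (etens e f n i) ys \<le> depth (f i) x")
    case le: True
    show ?thesis
    proof (cases "e i x")
      case None
      then have "etens e f (Suc n) i (x # ys) = None" using le by simp
      then have "depth (etens e f (Suc n) i) (x # ys) = 0" using E_step[OF cr a2 lxy] by simp
      moreover have "depth (e i) x = 0" using dep_e_None[OF cr a2 None] .
      ultimately show ?thesis using le by simp
    next
      case (Some y)
      then have et: "etens e f (Suc n) i (x # ys) = Some (y # ys)" using le by simp
      have st: "depth (e i) x = Suc (depth (e i) y)" "depth (f i) y = Suc (depth (f i) x)"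
        using dep_e_step[OF cr a2 Some] by auto
      have IH: "int (depth (etens e f (Suc n) i) (y # ys)) =
        max (int (depth (e i) y)) (int (depth (e i) y) + int (depth (etens e f n i) ys) - int (depth (f i) y))"
        using less.hyps[of y ys] st less.prems by simp
      have "depth (etens e f (Suc n) i) (x # ys) = Suc (depth (etens e f (Suc n) i) (y # ys))"
        using E_step[OF cr a2 lxy] et by simp
      then show ?thesis using IH st le by simp
    qed
  next
    case gt: False
    then have pos: "depth (etens e f n i) ys \<noteq> 0" by simp
    then obtain ys' where ys': "etens e f n i ys = Some ys'"
      using E_step[OF cr a2 less.prems] by (cases "etens e f n i ys") auto
    have dys: "depth (etens e f n i) ys = Suc (depth (etens e f n i) ys')"
      using E_step[OF cr a2 less.prems] ys' by simp
    have lys': "length ys' = Suc n" using etens_len_wt[OF cr a2 less.prems ys'] by simp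
    have et: "etens e f (Suc n) i (x # ys) = Some (x # ys')" using gt ys' by simp
    have IH: "int (depth (etens e f (Suc n) i) (x # ys')) =
        max (int (depth (e i) x)) (int (depth (e i) x) + int (depth (etens e f n i) ys') - int (depth (f i) x))"
      using less.hyps[of x ys'] dys lys' by simp
    have "depth (etens e f (Suc n) i) (x # ys) = Suc (depth (etens e f (Suc n) i) (x # ys'))"
      using E_step[OF cr a2 lxy] et by simp
    then show ?thesis using IH dys gt by simp
  qed
qed

lemma E_head:
  fixes wt :: "'b::finite \<Rightarrow> 'i \<Rightarrow> int"
  assumes cr: "crystal a wt e f" and a2: "a i i = 2" and len: "length L = Suc n"
  shows "depth (e i) (L ! 0) \<le> depth (etens e f n i) L"
proof (cases n)
  case 0
  with len obtain x where "L = [x]" by (cases L) auto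
  then show ?thesis using 0 E_base[of e f i x] by simp
next
  case (Suc m)
  with len obtain x ys where "L = x # ys" "length ys = Suc m" by (cases L) auto
  then show ?thesis using E_formula[OF cr a2, of ys m x] Suc by simp
qed


lemma step_pos:
  fixes wt :: "'b::finite \<Rightarrow> 'i \<Rightarrow> int"
  assumes cr: "crystal a wt e f" and a2: "a i i = 2"
  shows "length L = Suc n \<Longrightarrow> etens e f n i L = Some L' \<Longrightarrow>
    \<exists>m y. m \<le> n \<and> e i (L!m) = Some y \<and> L' = L[m:=y]
      \<and> (0 < m \<longrightarrow> depth (f i) (L!(m-1)) < depth (e i) (L!m))
      \<and> (m < n \<longrightarrow> depth (e i) (L!Suc m) \<le> depth (f i) (L!m))
      \<and> (m = 0 \<longrightarrow> depth (etens e f n i) L = depth (e i) (L!0))"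
proof (induction n arbitrary: L L')
  case 0
  then obtain x where x: "L = [x]" by (cases L) auto
  with 0 obtain y where y: "e i x = Some y" "L' = [y]" by auto
  show ?case
    by (rule exI[of _ 0], rule exI[of _ y]) (use x y E_base[of e f i x] in \<open>auto simp del: etens.simps\<close>)
next
  case (Suc n)
  then obtain x ys where L: "L = x # ys" and ly: "length ys = Suc n" by (cases L) auto
  show ?case
  proof (cases "depth (etens e f n i) ys \<le> depth (f i) x")
    case le: True
    with Suc.prems L obtain y where y: "e i x = Some y" "L' = y # ys" by auto
    have h: "depth (e i) (ys ! 0) \<le> depth (etens e f n i) ys" using E_head[OF cr a2 ly] .
    have fm: "int (depth (etens e f (Suc n) i) (x # ys)) =
     max (int (depth (e i) x)) (int (depth (e i) x) + int (depth (etens e f n i) ys) - int (depth (f i) x))"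
      using E_formula[OF cr a2 ly] .
    show ?thesis
      by (rule exI[of _ 0], rule exI[of _ y]) (use L y h fm le in \<open>auto simp del: etens.simps\<close>)
  next
    case gt: False
    with Suc.prems L obtain ys' where ys': "etens e f n i ys = Some ys'" "L' = x # ys'" by auto
    obtain m y where IH: "m \<le> n" "e i (ys!m) = Some y" "ys' = ys[m:=y]"
      "0 < m \<longrightarrow> depth (f i) (ys!(m-1)) < depth (e i) (ys!m)"
      "m < n \<longrightarrow> depth (e i) (ys!Suc m) \<le> depth (f i) (ys!m)"
      "m = 0 \<longrightarrow> depth (etens e f n i) ys = depth (e i) (ys!0)"
      using Suc.IH[OF ly ys'(1)] by blast
    have A: "depth (f i) (L!(Suc m - 1)) < depth (e i) (L!Suc m)"
    proof (cases m)
      case 0 then show ?thesis using IH(6) gt L by simp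
    next
      case (Suc m') then show ?thesis using IH(4) L by simp
    qed
    show ?thesis
      by (rule exI[of _ "Suc m"], rule exI[of _ y]) (use L IH ys' A in \<open>auto simp del: etens.simps\<close>)
  qed
qed

lemma Eng_alt:
  assumes "length q = Suc j"
  shows "Eng H q = (\<Sum>p<j. int (j-p) * H (q!p) (q!Suc p))"
proof -
  have "Eng H q = (\<Sum>k = 1..j. int k * H (q ! (j - k)) (q ! (j + 1 - k)))"
    unfolding Eng_def using assms by simp
  also have "\<dots> = (\<Sum>p<j. int (j-p) * H (q!p) (q!Suc p))"
  proof (rule sum.reindex_bij_witness[where i="\<lambda>p. j - p" and j="\<lambda>k. j - k"])
    fix k assume "k \<in> {1..j}"
    then show "j - (j - k) = k" "j - k \<in> {..<j}"
      "int (j - (j - k)) * H (q ! (j - k)) (q ! Suc (j - k)) = int k * H (q ! (j - k)) (q ! (j + 1 - k))"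
      by (auto simp: Suc_diff_le)
  next
    fix p assume "p \<in> {..<j}"
    then show "j - (j - p) = p" "j - p \<in> {1..j}" by auto
  qed
  finally show ?thesis .
qed

lemma etens1: "etens e f 1 i [b, b'] =
   (if depth (e i) b' \<le> depth (f i) b then map_option (\<lambda>y. [y, b']) (e i b)
    else map_option (\<lambda>y. [b, y]) (e i b'))"
  by (simp add: E_base option.map_comp comp_def)

lemma H_left:
  assumes en: "energy e f i0 H" and c: "depth (e i) b' \<le> depth (f i) b" and y: "e i b = Some y"
  shows "H y b' = H b b' + (if i = i0 then 1 else 0)"
proof -
  have "etens e f 1 i [b, b'] = Some [y, b']" unfolding etens1 using c y by simp
  then show ?thesis using en c unfolding energy_def by auto
qed

lemma H_right:
  assumes en: "energy e f i0 H" and c: "depth (f i) b < depth (e i) b'" and y: "e i b' = Some y"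
  shows "H b y = H b b' + (if i = i0 then -1 else 0)"
proof -
  have "etens e f 1 i [b, b'] = Some [b, y]" unfolding etens1 using c y by simp
  then show ?thesis using en c unfolding energy_def by auto
qed

lemma delta_sum:
  assumes "m \<le> j"
  shows "(\<Sum>p<j. int (j-p) * (if p = m then 1 else if Suc p = m then -1 else 0))
     = (if m = 0 then int j else -1)"
proof -
  have "(\<Sum>p<j. int (j-p) * (if p = m then 1 else if Suc p = m then -1 else 0))
     = (\<Sum>p<j. (if p = m then int (j-p) else 0)) - (\<Sum>p<j. (if Suc p = m then int (j-p) else 0))"
    unfolding sum_subtractf[symmetric] by (rule sum.cong) auto
  also have "(\<Sum>p<j. (if p = m then int (j-p) else 0)) = (if m < j then int (j - m) else 0)"
    by (simp add: sum.delta')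
  also have "(\<Sum>p<j. (if Suc p = m then int (j-p) else 0)) = (if 0 < m then int (j - (m - 1)) else 0)"
  proof (cases m)
    case 0 then show ?thesis by simp
  next
    case (Suc m')
    then have "(\<Sum>p<j. (if Suc p = m then int (j-p) else 0)) = (\<Sum>p<j. (if p = m' then int (j-p) else 0))"
      by (intro sum.cong) auto
    also have "\<dots> = int (j - m')" using Suc assms by (simp add: sum.delta')
    finally show ?thesis using Suc by simp
  qed
  finally show ?thesis using assms by auto
qed


lemma Eng_step:
  assumes en: "energy e f i0 H" and len: "length q = Suc j" and mj: "m \<le> j"
    and ey: "e i (q!m) = Some y"
    and A: "0 < m \<longrightarrow> depth (f i) (q!(m-1)) < depth (e i) (q!m)"
    and B: "m < j \<longrightarrow> depth (e i) (q!Suc m) \<le> depth (f i) (q!m)"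
  shows "Eng H (q[m:=y]) = Eng H q + (if i = i0 then (if m = 0 then int j else -1) else 0)"
proof -
  define D where "D p = (if p = m then 1 else if Suc p = m then -1 else (0::int))" for p
  have len': "length (q[m:=y]) = Suc j" using len by simp
  have HD: "H (q[m:=y]!p) (q[m:=y]!Suc p) = H (q!p) (q!Suc p) + (if i = i0 then D p else 0)"
    if pj: "p < j" for p
  proof -
    consider "p = m" | "Suc p = m" | "p \<noteq> m" "Suc p \<noteq> m" by blast
    then show ?thesis
    proof cases
      case 1
      then have "q[m:=y]!p = y" "q[m:=y]!Suc p = q!Suc p" using len pj by auto
      moreover have "H y (q!Suc p) = H (q!p) (q!Suc p) + (if i = i0 then 1 else 0)"
        using H_left[OF en _ ey[folded 1]] B 1 pj by simp
      ultimately show ?thesis using 1 D_def by simp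
    next
      case 2
      then have "q[m:=y]!p = q!p" "q[m:=y]!Suc p = y" using len pj by auto
      moreover have "H (q!p) y = H (q!p) (q!Suc p) + (if i = i0 then -1 else 0)"
      proof -
        have "depth (f i) (q!p) < depth (e i) (q!Suc p)" using A 2 by auto
        from H_right[OF en this] show ?thesis using ey 2 by simp
      qed
      ultimately show ?thesis using 2 D_def by auto
    next
      case 3
      then show ?thesis using D_def by simp
    qed
  qed
  have "Eng H (q[m:=y]) = (\<Sum>p<j. int (j-p) * H (q[m:=y]!p) (q[m:=y]!Suc p))"
    using Eng_alt[OF len'] .
  also have "\<dots> = (\<Sum>p<j. int (j-p) * H (q!p) (q!Suc p)) + (if i = i0 then (\<Sum>p<j. int (j-p) * D p) else 0)"
    by (cases "i = i0") (simp_all add: HD sum.distrib distrib_left)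
  also have "\<dots> = Eng H q + (if i = i0 then (if m = 0 then int j else -1) else 0)"
    using Eng_alt[OF len] delta_sum[OF mj] unfolding D_def by simp
  finally show ?thesis .
qed

lemma iter_main:
  fixes wt :: "'b::finite \<Rightarrow> 'i \<Rightarrow> int"
  assumes cr: "crystal a wt e f" and a2: "a i i = 2" and en: "energy e f i0 H"
  shows "length p = Suc j \<Longrightarrow> iter_opt (etens e f j i) n p = Some q \<Longrightarrow>
    \<exists>k. wt (q!0) i = wt (p!0) i + 2 * int k \<and>
        Eng H q = Eng H p + (if i = i0 then int k * (int j + 1) - int n else 0)"
proof (induction n arbitrary: p)
  case 0 then show ?case by (intro exI[of _ 0]) simp
next
  case (Suc n)
  then obtain p1 where p1: "etens e f j i p = Some p1" "iter_opt (etens e f j i) n p1 = Some q"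
    by (cases "etens e f j i p") auto
  obtain m y where S: "m \<le> j" "e i (p!m) = Some y" "p1 = p[m:=y]"
      "0 < m \<longrightarrow> depth (f i) (p!(m-1)) < depth (e i) (p!m)"
      "m < j \<longrightarrow> depth (e i) (p!Suc m) \<le> depth (f i) (p!m)"
    using step_pos[OF cr a2 Suc.prems(1) p1(1)] by blast
  have l1: "length p1 = Suc j" using S(3) Suc.prems(1) by simp
  obtain k1 where k1: "wt (q!0) i = wt (p1!0) i + 2 * int k1"
    "Eng H q = Eng H p1 + (if i = i0 then int k1 * (int j + 1) - int n else 0)"
    using Suc.IH[OF l1 p1(2)] by blast
  have E1: "Eng H p1 = Eng H p + (if i = i0 then (if m = 0 then int j else -1) else 0)"
    using Eng_step[OF en Suc.prems(1) S(1) S(2) S(4) S(5)] S(3) by simp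
  have W1: "wt (p1!0) i = wt (p!0) i + (if m = 0 then 2 else 0)"
    using S(2,3) Suc.prems(1) cr_wt[OF cr S(2)] a2 by (cases m) auto
  show ?case
  proof (rule exI[of _ "k1 + (if m = 0 then 1 else 0)"])
    show "wt (q!0) i = wt (p!0) i + 2 * int (k1 + (if m = 0 then 1 else 0)) \<and>
        Eng H q = Eng H p + (if i = i0 then int (k1 + (if m = 0 then 1 else 0)) * (int j + 1) - int (Suc n) else 0)"
      using k1 E1 W1 by (auto simp: algebra_simps)
  qed
qed

lemma iter_f_wt:
  fixes wt :: "'b::finite \<Rightarrow> 'i \<Rightarrow> int"
  assumes cr: "crystal a wt e f" and a2: "a i i = 2"
  shows "iter_opt (f i) r x = Some c \<Longrightarrow> wt c i = wt x i - 2 * int r"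
proof (induction r arbitrary: x)
  case 0 then show ?case by simp
next
  case (Suc r)
  then obtain z where z: "f i x = Some z" "iter_opt (f i) r z = Some c" by (cases "f i x") auto
  have "e i z = Some x" using z(1) cr_fe[OF cr] by blast
  then have "wt x i = wt z i + 2" using cr_wt[OF cr] a2 by auto
  then show ?case using Suc.IH[OF z(2)] by simp
qed

theorem mainTheorem5:
  fixes a :: "'i::finite \<Rightarrow> 'i \<Rightarrow> int" and i0 :: 'i
    and wt :: "'b::finite \<Rightarrow> 'i wcl"
    and e f :: "'i \<Rightarrow> 'b \<Rightarrow> 'b option"
    and H :: "'b \<Rightarrow> 'b \<Rightarrow> int"
    and b :: 'b and i :: 'i and \<xi> :: "'i wt" and j n s t :: nat and p :: "'b list"
  assumes "affine_cartan a" and "special_node a i0"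
    and "crystal a wt e f" and "energy e f i0 H"
    and "t \<le> s" and "s \<le> depth (f i) b"
    and "p \<in> Pset wt j (the (iter_opt (f i) s b)) \<xi>"
    and "iter_opt (etens e f j i) n p \<noteq> None"
    and "the (iter_opt (etens e f j i) n p)
           \<in> Pset wt j (the (iter_opt (f i) t b))
                (wadd \<xi> (wsmul (int n + int t - int s) (alpha a i0 i)))"
  shows "Eng H (the (iter_opt (etens e f j i) n p))
           = Eng H p + (if i = i0 then (int j + 1) * (int s - int t) - int n else 0)"
proof -
  have a2: "a i i = 2" using assms(1) unfolding affine_cartan_def gcm_def by blast
  note cr = assms(3)
  obtain q where q: "iter_opt (etens e f j i) n p = Some q" using assms(8) by blast
  have bf: "bnd (f i) b" using bnd_f[OF cr a2] .
  obtain bs where bs: "iter_opt (f i) s b = Some bs" using depth_iff[OF bf, of s] assms(6) by auto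
  obtain bt where bt: "iter_opt (f i) t b = Some bt" using depth_iff[OF bf, of t] assms(5,6) by auto
  have p0: "p!0 = bs" "length p = Suc j" using assms(7) bs unfolding Pset_def by auto
  have q0: "q!0 = bt" using assms(9) bt q unfolding Pset_def by auto
  obtain k where k: "wt (q!0) i = wt (p!0) i + 2 * int k"
    "Eng H q = Eng H p + (if i = i0 then int k * (int j + 1) - int n else 0)"
    using iter_main[OF cr a2 assms(4) p0(2) q] by blast
  have "wt bs i = wt b i - 2 * int s" "wt bt i = wt b i - 2 * int t"
    using iter_f_wt[OF cr a2 bs] iter_f_wt[OF cr a2 bt] by auto
  then have "int k = int s - int t" using k(1) p0 q0 by simp
  then have "int k * (int j + 1) = (int j + 1) * (int s - int t)" by simp
  then show ?thesis using k(2) q by simp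
qed

end
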